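(* Let $g\in\mathcal{H}(\mathbb{D})$ be zero-free, let $h$ be a branch of the logarithm of $g$, and for $\beta\in\mathbb{R}$ set $g^\beta:=e^{\beta h}$. Then for every $\beta\in\mathbb{R}$ and every $\varepsilon\in\mathbb{R}\setminus\{1\}$, \[ S_{g^\beta}T_{g^\beta}^2=\frac{(2\beta-1)\beta}{1-\varepsilon}\,T_gT_{g^{1-\varepsilon}}M_{g^{2\beta-2+\varepsilon}}T_{g^\beta}+\frac{\beta^2}{1-\varepsilon}\,T_gT_{g^{1-\varepsilon}}M_{g^{3\beta-2+\varepsilon}} \] as operators on $\mathcal{H}(\mathbb{D})$.
   Context: $\mathcal{H}(\mathbb{D})$ is the space of analytic functions on the unit disc. For analytic $u$: $M_uf=uf$, $T_uf(z)=\int_0^zf(\zeta)u'(\zeta)\,d\zeta$, $S_uf(z)=\int_0^zf'(\zeta)u(\zeta)\,d\zeta$. *)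

theory Defs
  imports "HOL-Complex_Analysis.Complex_Analysis"
begin

text \<open>Functions are
  represented as maps complex to complex; only their values on the open unit disc
  (ball 0 1) matter.\<close>

definition Mop :: "(complex \<Rightarrow> complex) \<Rightarrow> (complex \<Rightarrow> complex) \<Rightarrow> complex \<Rightarrow> complex" where
  "Mop u f = (\<lambda>z. u z * f z)"

definition Top :: "(complex \<Rightarrow> complex) \<Rightarrow> (complex \<Rightarrow> complex) \<Rightarrow> complex \<Rightarrow> complex" where
  "Top u f = (\<lambda>z. contour_integral (linepath 0 z) (\<lambda>\<zeta>. f \<zeta> * deriv u \<zeta>))"

definition Sop :: "(complex \<Rightarrow> complex) \<Rightarrow> (complex \<Rightarrow> complex) \<Rightarrow> complex \<Rightarrow> complex" where
  "Sop u f = (\<lambda>z. contour_integral (linepath 0 z) (\<lambda>\<zeta>. deriv f \<zeta> * u \<zeta>))"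

definition gpow :: "(complex \<Rightarrow> complex) \<Rightarrow> real \<Rightarrow> complex \<Rightarrow> complex" where
  "gpow h \<beta> = (\<lambda>z. exp (of_real \<beta> * h z))"

end

theory Submission
  imports Defs
begin

lemma prim:
  fixes \<phi> :: "complex \<Rightarrow> complex"
  assumes "\<phi> holomorphic_on ball 0 1" "z \<in> ball 0 1"
  shows "((\<lambda>z. contour_integral (linepath 0 z) \<phi>) has_field_derivative \<phi> z) (at z)"
proof -
  obtain F where F: "\<And>x. x \<in> ball 0 1 \<Longrightarrow> (F has_field_derivative \<phi> x) (at x within ball 0 1)"
    using holomorphic_convex_primitive'[OF convex_ball open_ball assms(1)] by blast
  have F': "(F has_field_derivative \<phi> x) (at x)" if "x \<in> ball 0 1" for x
    using F[OF that] at_within_open[OF that open_ball] by metis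
  have eq: "contour_integral (linepath 0 w) \<phi> = F w - F 0" if w: "w \<in> ball 0 1" for w
  proof -
    have "closed_segment 0 w \<subseteq> ball (0::complex) 1"
      using w by (simp add: closed_segment_subset convex_ball)
    then have "(\<phi> has_contour_integral (F (pathfinish (linepath 0 w)) - F (pathstart (linepath 0 w)))) (linepath 0 w)"
      by (intro contour_integral_primitive[OF F]) auto
    then show ?thesis by (simp add: contour_integral_unique)
  qed
  have "((\<lambda>w. F w - F 0) has_field_derivative \<phi> z) (at z)"
    using F'[OF assms(2)] by (auto intro!: derivative_eq_intros)
  then show ?thesis
    by (rule has_field_derivative_transform_within_open[OF _ open_ball assms(2)]) (use eq in auto)
qed

lemma top_deriv:
  assumes "F holomorphic_on ball 0 1" "u holomorphic_on ball 0 1" "z \<in> ball 0 1"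
  shows "(Top u F has_field_derivative F z * deriv u z) (at z)"
  unfolding Top_def
  by (rule prim) (use assms in \<open>auto intro!: holomorphic_intros holomorphic_deriv\<close>)

lemma sop_deriv:
  assumes "F holomorphic_on ball 0 1" "u holomorphic_on ball 0 1" "z \<in> ball 0 1"
  shows "(Sop u F has_field_derivative deriv F z * u z) (at z)"
  unfolding Sop_def
  by (rule prim) (use assms in \<open>auto intro!: holomorphic_intros holomorphic_deriv\<close>)

lemma top_hol:
  assumes "F holomorphic_on ball 0 1" "u holomorphic_on ball 0 1"
  shows "Top u F holomorphic_on ball 0 1"
  unfolding holomorphic_on_open[OF open_ball] using top_deriv[OF assms] by blast

lemma top0 [simp]: "Top u F 0 = 0" by (simp add: Top_def)
lemma sop0 [simp]: "Sop u F 0 = 0" by (simp add: Sop_def)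

lemma gpow_hol: "h holomorphic_on ball 0 1 \<Longrightarrow> gpow h c holomorphic_on ball 0 1"
  unfolding gpow_def by (intro holomorphic_intros)

lemma gpow_deriv:
  assumes "h holomorphic_on ball 0 1" "z \<in> ball 0 1"
  shows "deriv (gpow h c) z = of_real c * deriv h z * gpow h c z"
proof -
  have "(h has_field_derivative deriv h z) (at z)"
    using assms holomorphic_derivI open_ball by blast
  then have "(gpow h c has_field_derivative of_real c * deriv h z * gpow h c z) (at z)"
    unfolding gpow_def by (auto intro!: derivative_eq_intros)
  then show ?thesis by (rule DERIV_imp_deriv)
qed

lemma mop_hol: "u holomorphic_on ball 0 1 \<Longrightarrow> F holomorphic_on ball 0 1 \<Longrightarrow> Mop u F holomorphic_on ball 0 1"
  unfolding Mop_def by (intro holomorphic_intros)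

lemma expc: "exp (complex_of_real x * w) * exp (complex_of_real y * w) = exp (complex_of_real (x+y) * w)"
  by (simp add: exp_add[symmetric] distrib_right)

lemma alg1:
  fixes c1 c2 a b2 b E1 E2 Ea E3 Eb t F H :: complex
  shows "c1 * ((E1 * t) * (a * H * Ea)) + c2 * ((E2 * F) * (a * H * Ea))
     - b * ((b2 * H * E3) * t + E3 * (F * (b * H * Eb)))
   = (c1*a) * t * H * (E1*Ea) + (c2*a) * F * H * (E2*Ea) - b*b2*H*E3*t - b*b*F*H*(E3*Eb)"
  by (simp add: algebra_simps)

lemma alg2:
  fixes b :: real and T H E E' F :: complex
  shows "of_real((2*b-1)*b) * T * H * E + of_real(b^2)*F*H*E' - of_real b * of_real(2*b-1) * H*E*T
     - of_real b * of_real b*F*H*E' = 0"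
  by (simp add: algebra_simps power2_eq_square)

theorem lemma5p2:
  fixes g h :: "complex \<Rightarrow> complex" and \<beta> \<epsilon> :: real
  assumes "g holomorphic_on ball 0 1"
    and "\<forall>z\<in>ball 0 1. g z \<noteq> 0"
    and "h holomorphic_on ball 0 1"
    and "\<forall>z\<in>ball 0 1. exp (h z) = g z"
    and "\<epsilon> \<noteq> 1"
    and "f holomorphic_on ball 0 1"
    and "z \<in> ball 0 1"
  shows "Sop (gpow h \<beta>) (Top (gpow h \<beta>) (Top (gpow h \<beta>) f)) z =
     of_real ((2 * \<beta> - 1) * \<beta> / (1 - \<epsilon>)) *
       Top g (Top (gpow h (1 - \<epsilon>)) (Mop (gpow h (2 * \<beta> - 2 + \<epsilon>)) (Top (gpow h \<beta>) f))) z
   + of_real (\<beta>^2 / (1 - \<epsilon>)) *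
       Top g (Top (gpow h (1 - \<epsilon>)) (Mop (gpow h (3 * \<beta> - 2 + \<epsilon>)) f)) z"
proof -
  let ?B = "ball (0::complex) 1"
  note hh = assms(3) and gh = assms(1) and fh = assms(6)
  let ?c1 = "complex_of_real ((2 * \<beta> - 1) * \<beta> / (1 - \<epsilon>))"
  let ?c2 = "complex_of_real (\<beta>^2 / (1 - \<epsilon>))"
  let ?e = "\<lambda>r w. exp (complex_of_real r * h w)"
  define T1 where "T1 = Top (gpow h \<beta>) f"
  define T2 where "T2 = Top (gpow h \<beta>) T1"
  define L where "L = Sop (gpow h \<beta>) T2"
  define A1 where "A1 = Top (gpow h (1 - \<epsilon>)) (Mop (gpow h (2 * \<beta> - 2 + \<epsilon>)) T1)"
  define A2 where "A2 = Top (gpow h (1 - \<epsilon>)) (Mop (gpow h (3 * \<beta> - 2 + \<epsilon>)) f)"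
  define R1 where "R1 = Top g A1"
  define R2 where "R2 = Top g A2"
  define \<Phi> where "\<Phi> = (\<lambda>w. complex_of_real \<beta> * gpow h (2*\<beta>-1) w * T1 w)"
  have Gh: "\<And>c. gpow h c holomorphic_on ?B" using gpow_hol[OF hh] .
  have T1h: "T1 holomorphic_on ?B" unfolding T1_def by (intro top_hol Gh fh)
  have T2h: "T2 holomorphic_on ?B" unfolding T2_def by (intro top_hol Gh T1h)
  have A1h: "A1 holomorphic_on ?B" unfolding A1_def by (intro top_hol Gh T1h mop_hol)
  have A2h: "A2 holomorphic_on ?B" unfolding A2_def by (intro top_hol Gh fh mop_hol)
  have dG: "\<And>c w. w \<in> ?B \<Longrightarrow> deriv (gpow h c) w = of_real c * deriv h w * ?e c w"
    using gpow_deriv[OF hh] by (simp add: gpow_def)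
  have dg: "deriv g w = deriv h w * exp (h w)" if w: "w \<in> ?B" for w
  proof -
    have "(h has_field_derivative deriv h w) (at w)"
      using w hh holomorphic_derivI open_ball by blast
    then have "((\<lambda>w. exp (h w)) has_field_derivative exp (h w) * deriv h w) (at w)"
      by (auto intro!: derivative_eq_intros)
    then have "(g has_field_derivative exp (h w) * deriv h w) (at w)"
      by (rule has_field_derivative_transform_within_open[OF _ open_ball w]) (use assms(4) in auto)
    then show ?thesis by (simp add: DERIV_imp_deriv)
  qed
  have T1d: "(T1 has_field_derivative f w * (of_real \<beta> * deriv h w * ?e \<beta> w)) (at w)" if "w \<in> ?B" for w
    using top_deriv[OF fh Gh that] dG[OF that] unfolding T1_def by simp
  have dT2: "deriv T2 w = T1 w * (of_real \<beta> * deriv h w * ?e \<beta> w)" if "w \<in> ?B" for w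
    using top_deriv[OF T1h Gh that] dG[OF that] unfolding T2_def by (simp add: DERIV_imp_deriv)
  have Ld: "(L has_field_derivative T1 w * (of_real \<beta> * deriv h w * ?e \<beta> w) * ?e \<beta> w) (at w)" if "w \<in> ?B" for w
    using sop_deriv[OF T2h Gh that] dT2[OF that] unfolding L_def by (simp add: gpow_def)
  have A1d: "(A1 has_field_derivative (?e (2 * \<beta> - 2 + \<epsilon>) w * T1 w) * (of_real (1-\<epsilon>) * deriv h w * ?e (1-\<epsilon>) w)) (at w)" if "w \<in> ?B" for w
    using top_deriv[OF mop_hol[OF Gh[of "2 * \<beta> - 2 + \<epsilon>"] T1h] Gh[of "1-\<epsilon>"] that] unfolding A1_def dG[OF that] by (simp only: Mop_def gpow_def)
  have A2d: "(A2 has_field_derivative (?e (3 * \<beta> - 2 + \<epsilon>) w * f w) * (of_real (1-\<epsilon>) * deriv h w * ?e (1-\<epsilon>) w)) (at w)" if "w \<in> ?B" for w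
    using top_deriv[OF mop_hol[OF Gh[of "3 * \<beta> - 2 + \<epsilon>"] fh] Gh[of "1-\<epsilon>"] that] unfolding A2_def dG[OF that] by (simp only: Mop_def gpow_def)
  have R1d: "(R1 has_field_derivative A1 w * (deriv h w * exp (h w))) (at w)" if "w \<in> ?B" for w
    using top_deriv[OF A1h gh that] dg[OF that] unfolding R1_def by simp
  have R2d: "(R2 has_field_derivative A2 w * (deriv h w * exp (h w))) (at w)" if "w \<in> ?B" for w
    using top_deriv[OF A2h gh that] dg[OF that] unfolding R2_def by simp
  have Phid: "(\<Phi> has_field_derivative of_real \<beta> * ((of_real (2*\<beta>-1) * deriv h w * ?e (2*\<beta>-1) w) * T1 w
       + ?e (2*\<beta>-1) w * (f w * (of_real \<beta> * deriv h w * ?e \<beta> w)))) (at w)" if w: "w \<in> ?B" for w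
  proof -
    have "(h has_field_derivative deriv h w) (at w)"
      using w hh holomorphic_derivI open_ball by blast
    then show ?thesis unfolding \<Phi>_def gpow_def
      by (auto intro!: derivative_eq_intros T1d[OF w] simp: algebra_simps)
  qed
  have a0: "1 - \<epsilon> \<noteq> 0" using assms(5) by simp
  have K: "?c1 * A1 w + ?c2 * A2 w = \<Phi> w" if w: "w \<in> ?B" for w
  proof -
    have "\<exists>c. \<forall>x\<in>?B. ?c1 * A1 x + ?c2 * A2 x - \<Phi> x = c"
    proof (rule has_field_derivative_zero_constant[OF convex_ball])
      fix x assume x: "x \<in> ?B"
      have D: "((\<lambda>x. ?c1 * A1 x + ?c2 * A2 x - \<Phi> x) has_field_derivative
          ?c1 * ((?e (2 * \<beta> - 2 + \<epsilon>) x * T1 x) * (of_real (1-\<epsilon>) * deriv h x * ?e (1-\<epsilon>) x))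
        + ?c2 * ((?e (3 * \<beta> - 2 + \<epsilon>) x * f x) * (of_real (1-\<epsilon>) * deriv h x * ?e (1-\<epsilon>) x))
        - of_real \<beta> * ((of_real (2*\<beta>-1) * deriv h x * ?e (2*\<beta>-1) x) * T1 x
       + ?e (2*\<beta>-1) x * (f x * (of_real \<beta> * deriv h x * ?e \<beta> x)))) (at x)"
        by (intro DERIV_diff DERIV_add DERIV_cmult A1d A2d Phid x)
      have e1: "?e (2 * \<beta> - 2 + \<epsilon>) x * ?e (1-\<epsilon>) x = ?e (2*\<beta>-1) x"
        unfolding expc by (rule arg_cong[where f="\<lambda>r. exp (complex_of_real r * h x)"]) simp
      have e2: "?e (3 * \<beta> - 2 + \<epsilon>) x * ?e (1-\<epsilon>) x = ?e (3*\<beta>-1) x"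
        unfolding expc by (rule arg_cong[where f="\<lambda>r. exp (complex_of_real r * h x)"]) simp
      have e3: "?e (2*\<beta>-1) x * ?e \<beta> x = ?e (3*\<beta>-1) x"
        unfolding expc by (rule arg_cong[where f="\<lambda>r. exp (complex_of_real r * h x)"]) simp
      have c1: "?c1 * of_real (1-\<epsilon>) = of_real ((2*\<beta>-1)*\<beta>)"
        using a0 by (simp flip: of_real_mult)
      have c2: "?c2 * of_real (1-\<epsilon>) = of_real (\<beta>^2)"
        using a0 by (simp flip: of_real_mult)
      have "?c1 * ((?e (2 * \<beta> - 2 + \<epsilon>) x * T1 x) * (of_real (1-\<epsilon>) * deriv h x * ?e (1-\<epsilon>) x))
        + ?c2 * ((?e (3 * \<beta> - 2 + \<epsilon>) x * f x) * (of_real (1-\<epsilon>) * deriv h x * ?e (1-\<epsilon>) x))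
        - of_real \<beta> * ((of_real (2*\<beta>-1) * deriv h x * ?e (2*\<beta>-1) x) * T1 x
       + ?e (2*\<beta>-1) x * (f x * (of_real \<beta> * deriv h x * ?e \<beta> x)))
        = (?c1 * of_real (1-\<epsilon>)) * T1 x * deriv h x * (?e (2 * \<beta> - 2 + \<epsilon>) x * ?e (1-\<epsilon>) x)
        + (?c2 * of_real (1-\<epsilon>)) * f x * deriv h x * (?e (3 * \<beta> - 2 + \<epsilon>) x * ?e (1-\<epsilon>) x)
        - of_real \<beta> * of_real (2*\<beta>-1) * deriv h x * ?e (2*\<beta>-1) x * T1 x
        - of_real \<beta> * of_real \<beta> * f x * deriv h x * (?e (2*\<beta>-1) x * ?e \<beta> x)"
        by (rule alg1)
      also have "\<dots> = 0"
        unfolding e1 e2 e3 c1 c2 by (rule alg2)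
      finally show "((\<lambda>x. ?c1 * A1 x + ?c2 * A2 x - \<Phi> x) has_field_derivative 0) (at x within ?B)"
        using D by (simp add: has_field_derivative_at_within)
    qed
    then obtain c where c: "\<forall>x\<in>?B. ?c1 * A1 x + ?c2 * A2 x - \<Phi> x = c" by blast
    have "c = 0" using c[rule_format, of 0] by (simp add: A1_def A2_def \<Phi>_def T1_def)
    then show ?thesis using c w by simp
  qed
  have "\<exists>c. \<forall>x\<in>?B. L x - (?c1 * R1 x + ?c2 * R2 x) = c"
  proof (rule has_field_derivative_zero_constant[OF convex_ball])
    fix x assume x: "x \<in> ?B"
    have D: "((\<lambda>x. L x - (?c1 * R1 x + ?c2 * R2 x)) has_field_derivative
        T1 x * (of_real \<beta> * deriv h x * ?e \<beta> x) * ?e \<beta> x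
        - (?c1 * (A1 x * (deriv h x * exp (h x))) + ?c2 * (A2 x * (deriv h x * exp (h x))))) (at x)"
      by (intro DERIV_diff DERIV_add DERIV_cmult Ld R1d R2d x)
    have e: "?e \<beta> x * ?e \<beta> x = ?e (2*\<beta>-1) x * exp (h x)"
      using expc[of \<beta> "h x" \<beta>] expc[of "2*\<beta>-1" "h x" 1] by simp
    have "T1 x * (of_real \<beta> * deriv h x * ?e \<beta> x) * ?e \<beta> x
        - (?c1 * (A1 x * (deriv h x * exp (h x))) + ?c2 * (A2 x * (deriv h x * exp (h x))))
        = of_real \<beta> * T1 x * deriv h x * (?e \<beta> x * ?e \<beta> x)
        - (?c1 * A1 x + ?c2 * A2 x) * (deriv h x * exp (h x))"
      by (simp add: algebra_simps)
    also have "\<dots> = 0"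
      unfolding e K[OF x] \<Phi>_def gpow_def by (simp add: algebra_simps)
    finally show "((\<lambda>x. L x - (?c1 * R1 x + ?c2 * R2 x)) has_field_derivative 0) (at x within ?B)"
      using D by (simp add: has_field_derivative_at_within)
  qed
  then obtain c where c: "\<forall>x\<in>?B. L x - (?c1 * R1 x + ?c2 * R2 x) = c" by blast
  have "c = 0" using c[rule_format, of 0] by (simp add: L_def R1_def R2_def)
  then have "L z = ?c1 * R1 z + ?c2 * R2 z" using c assms(7) by simp
  then show ?thesis unfolding L_def R1_def R2_def A1_def A2_def T2_def T1_def .
qed

end
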